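(* Let $A\in\mathbb{R}^{n\times n}$, $C\in\mathbb{R}^{m\times n}$. The linear system $x^+=Ax$, $y=Cx$ (with $\mathcal{X}=\mathbb{R}^n$, $\mathcal{Y}=\mathbb{R}^m$) is deadbeat observable if and only if there exists an integer $p\ge1$ such that for every $x\in\mathbb{R}^n$ the set $[x]_{p-1}$ is either a singleton or empty.
   Context: For a system $x^+=f(x)$, $y=h(x)$ with $f:\mathcal{X}\to\mathcal{X}$, $h:\mathcal{X}\to\mathcal{Y}$, inverse images are set-valued: $f^{-1}(x):=\{\eta\in\mathcal{X}: f(\eta)=x\}$, $h^{-1}(y):=\{\eta:h(\eta)=y\}$; images of sets are $f(S)=\{f(s):s\in S\}$ and $[S]_k:=\bigcup_{s\in S}[s]_k$. Define $[x]_0:=h^{-1}(h(x))$, and for $k\ge0$: $[x]_k^+:=f([f^{-1}(x)]_k)$, $[x]_{k+1}:=[x]_k^+\cap[x]_0$. Here $f(x)=Ax$, $h(x)=Cx$. Solutions: $\phi(0,x)=x$, $\phi(k+1,x)=f(\phi(k,x))$. Given $g:\mathcal{X}\times\mathcal{Y}\rightrightarrows\mathcal{X}$, a solution of $\hat x^+\in g(\hat x,h(x))$ driven by $x^+=f(x)$ is any sequence $\psi(k,\hat x,x)$ with $\psi(0,\hat x,x)=\hat x$, $\psi(k+1,\hat x,x)\in g(\psi(k,\hat x,x),h(\phi(k,x)))$. The system $\hat x^+\in g(\hat x,y)$ is a deadbeat observer if there is $p\ge1$ such that all such solutions satisfy $\psi(k,\hat x,x)=\phi(k,x)$ for all $x,\hat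 x\in\mathcal{X}$ and $k\ge p$; the system is deadbeat observable if a deadbeat observer exists. *)

theory Defs
  imports "HOL-Analysis.Analysis"
begin

definition finv :: "('a \<Rightarrow> 'a) \<Rightarrow> 'a \<Rightarrow> 'a set" where
  "finv f x = {\<eta>. f \<eta> = x}"

fun eqcls :: "('a \<Rightarrow> 'a) \<Rightarrow> ('a \<Rightarrow> 'b) \<Rightarrow> nat \<Rightarrow> 'a \<Rightarrow> 'a set" where
  "eqcls f h 0 x = {\<eta>. h \<eta> = h x}"
| "eqcls f h (Suc k) x =
     f ` (\<Union>s\<in>finv f x. eqcls f h k s) \<inter> eqcls f h 0 x"

definition phi :: "('a \<Rightarrow> 'a) \<Rightarrow> nat \<Rightarrow> 'a \<Rightarrow> 'a" where
  "phi f k x = (f ^^ k) x"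

definition is_obs_solution ::
  "('a \<Rightarrow> 'a) \<Rightarrow> ('a \<Rightarrow> 'b) \<Rightarrow> ('a \<Rightarrow> 'b \<Rightarrow> 'a set) \<Rightarrow> 'a \<Rightarrow> 'a \<Rightarrow> (nat \<Rightarrow> 'a) \<Rightarrow> bool" where
  "is_obs_solution f h g xh x psi \<longleftrightarrow>
     psi 0 = xh \<and> (\<forall>k. psi (Suc k) \<in> g (psi k) (h (phi f k x)))"

text \<open>Deadbeat observer. The set-valued map g is required to have nonempty values
  (otherwise the empty map would vacuously be a deadbeat observer).\<close>
definition deadbeat_observer ::
  "('a \<Rightarrow> 'a) \<Rightarrow> ('a \<Rightarrow> 'b) \<Rightarrow> ('a \<Rightarrow> 'b \<Rightarrow> 'a set) \<Rightarrow> bool" where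
  "deadbeat_observer f h g \<longleftrightarrow>
     (\<forall>xh y. g xh y \<noteq> {}) \<and>
     (\<exists>p::nat. p \<ge> 1 \<and>
        (\<forall>x xh psi. is_obs_solution f h g xh x psi \<longrightarrow>
           (\<forall>k\<ge>p. psi k = phi f k x)))"

definition deadbeat_observable :: "('a \<Rightarrow> 'a) \<Rightarrow> ('a \<Rightarrow> 'b) \<Rightarrow> bool" where
  "deadbeat_observable f h \<longleftrightarrow> (\<exists>g. deadbeat_observer f h g)"

end

theory Submission
  imports Defs
begin

lemma eqcls_traj:
  "z \<in> eqcls f h k x \<longleftrightarrow> (\<exists>a b. (f^^k) a = x \<and> (f^^k) b = z \<and>
      (\<forall>i\<le>k. h ((f^^i) a) = h ((f^^i) b)))"
proof (induction k arbitrary: x z)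
  case 0
  then show ?case by auto
next
  case (Suc k)
  show ?case
  proof
    assume "z \<in> eqcls f h (Suc k) x"
    then obtain s0 w where s0: "f s0 = x" and w: "w \<in> eqcls f h k s0" and fw: "f w = z"
      and hz: "h z = h x"
      by (auto simp: finv_def)
    from w Suc.IH obtain a b where ab: "(f^^k) a = s0" "(f^^k) b = w"
      "\<forall>i\<le>k. h ((f^^i) a) = h ((f^^i) b)" by blast
    show "\<exists>a b. (f^^Suc k) a = x \<and> (f^^Suc k) b = z \<and>
      (\<forall>i\<le>Suc k. h ((f^^i) a) = h ((f^^i) b))"
    proof (intro exI conjI allI impI)
      show "(f^^Suc k) a = x" using ab s0 by simp
      show "(f^^Suc k) b = z" using ab fw by simp
      fix i assume "i \<le> Suc k"
      then consider "i \<le> k" | "i = Suc k" by linarith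
      then show "h ((f^^i) a) = h ((f^^i) b)"
        by cases (use ab s0 fw hz in auto)
    qed
  next
    assume "\<exists>a b. (f^^Suc k) a = x \<and> (f^^Suc k) b = z \<and>
      (\<forall>i\<le>Suc k. h ((f^^i) a) = h ((f^^i) b))"
    then obtain a b where ab: "(f^^Suc k) a = x" "(f^^Suc k) b = z"
      "\<forall>i\<le>Suc k. h ((f^^i) a) = h ((f^^i) b)" by blast
    have "(f^^k) b \<in> eqcls f h k ((f^^k) a)"
      unfolding Suc.IH using ab(3) le_Suc_eq by blast
    moreover have "f ((f^^k) a) = x" "f ((f^^k) b) = z" using ab by auto
    moreover have "h z = h x" using ab(3)[rule_format, of "Suc k"] ab by simp
    ultimately show "z \<in> eqcls f h (Suc k) x"
      by (auto simp: finv_def)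
  qed
qed

lemma lin_pow:
  fixes A :: "real ^ 'n ^ 'n"
  shows "((\<lambda>x. A *v x)^^i) (u - v) = ((\<lambda>x. A *v x)^^i) u - ((\<lambda>x. A *v x)^^i) v"
  by (induction i) (auto simp: matrix_vector_mult_diff_distrib)

lemma lin_pow0:
  fixes A :: "real ^ 'n ^ 'n"
  shows "((\<lambda>x. A *v x)^^i) 0 = 0"
  by (induction i) auto

fun KK :: "real ^ 'n ^ 'n \<Rightarrow> real ^ 'n ^ 'm \<Rightarrow> nat \<Rightarrow> (real ^ 'n) set" where
  "KK A C 0 = UNIV"
| "KK A C (Suc j) = (\<lambda>x. A *v x) ` (KK A C j \<inter> {d. C *v d = 0})"

lemma KK_zero: "0 \<in> KK A C j"
  by (induction j) (auto intro!: image_eqI[where x=0])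

lemma KK_add: "u \<in> KK A C j \<Longrightarrow> v \<in> KK A C j \<Longrightarrow> u + v \<in> KK A C j"
proof (induction j arbitrary: u v)
  case 0 then show ?case by simp
next
  case (Suc j)
  then obtain u' v' where "u = A *v u'" "v = A *v v'" "u' \<in> KK A C j" "v' \<in> KK A C j"
    "C *v u' = 0" "C *v v' = 0" by auto
  then show ?case using Suc.IH
    by (auto intro!: image_eqI[where x="u'+v'"] simp: matrix_vector_right_distrib)
qed

lemma KK_neg: "u \<in> KK A C j \<Longrightarrow> - u \<in> KK A C j"
proof (induction j arbitrary: u)
  case 0 then show ?case by simp
next
  case (Suc j)
  then obtain u' where "u = A *v u'" "u' \<in> KK A C j" "C *v u' = 0" by auto
  then show ?case using Suc.IH
    using matrix_vector_mult_diff_distrib[of A 0 u'] matrix_vector_mult_diff_distrib[of C 0 u']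
    by (auto intro!: image_eqI[where x="-u'"] simp: matrix_vector_mult_diff_distrib)
qed

lemma KK_Suc_sub: "KK A C (Suc j) \<subseteq> KK A C j"
proof (induction j)
  case 0 then show ?case by simp
next
  case (Suc j)
  then show ?case by (auto simp del: KK.simps(2) simp: KK.simps(2)[of A C "Suc j"] KK.simps(2)[of A C j])
qed

lemma KK_anti: "i \<le> j \<Longrightarrow> KK A C j \<subseteq> KK A C i"
  using lift_Suc_antimono_le[of "KK A C", OF KK_Suc_sub] by blast

lemma KK_char: "d \<in> KK A C j \<Longrightarrow> \<exists>c. d = ((\<lambda>x. A *v x)^^j) c \<and>
   (\<forall>i<j. C *v (((\<lambda>x. A *v x)^^i) c) = 0)"
proof (induction j arbitrary: d)
  case 0 then show ?case by simp
next
  case (Suc j)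
  then obtain d' where d': "d = A *v d'" "d' \<in> KK A C j" "C *v d' = 0" by auto
  then obtain c where c: "d' = ((\<lambda>x. A *v x)^^j) c" "\<forall>i<j. C *v (((\<lambda>x. A *v x)^^i) c) = 0"
    using Suc.IH by blast
  show ?case
  proof (intro exI conjI allI impI)
    show "d = ((\<lambda>x. A *v x)^^Suc j) c" using c d' by simp
    fix i assume "i < Suc j"
    then consider "i < j" | "i = j" by linarith
    then show "C *v (((\<lambda>x. A *v x)^^i) c) = 0" by cases (use c d' in auto)
  qed
qed

fun obs_seq :: "('a \<Rightarrow> 'b \<Rightarrow> 'a set) \<Rightarrow> (nat \<Rightarrow> 'b) \<Rightarrow> 'a \<Rightarrow> nat \<Rightarrow> 'a" where
  "obs_seq g y xh 0 = xh"
| "obs_seq g y xh (Suc k) = (SOME w. w \<in> g (obs_seq g y xh k) (y k))"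

lemma obs_seq_sol:
  assumes "\<forall>a b. g a b \<noteq> {}"
  shows "is_obs_solution f h g xh x (obs_seq g (\<lambda>k. h (phi f k x)) xh)"
  unfolding is_obs_solution_def using assms by (simp add: some_in_eq)

lemma obs_seq_agree:
  assumes "\<forall>k<p. y k = y' k"
  shows "k \<le> p \<Longrightarrow> obs_seq g y xh k = obs_seq g y' xh k"
  using assms by (induction k) auto

lemma lin_C:
  fixes C :: "real ^ 'n ^ 'm"
  shows "C *v (u - v) = C *v u - C *v v"
  by (simp add: matrix_vector_mult_diff_distrib)

lemma dir1:
  fixes A :: "real ^ 'n ^ 'n" and C :: "real ^ 'n ^ 'm"
  assumes "deadbeat_observable (\<lambda>x. A *v x) (\<lambda>x. C *v x)"
  shows "\<exists>p::nat. p \<ge> 1 \<and>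
       (\<forall>x :: real ^ 'n.
          (\<exists>z. eqcls (\<lambda>x. A *v x) (\<lambda>x. C *v x) (p - 1) x = {z}) \<or>
          eqcls (\<lambda>x. A *v x) (\<lambda>x. C *v x) (p - 1) x = {})"
proof -
  define f where "f = (\<lambda>x. A *v x)"
  define h where "h = (\<lambda>x. C *v x)"
  obtain g p where ne: "\<forall>a b. g a b \<noteq> {}" and p: "p \<ge> 1"
    and obs: "\<And>x xh psi. is_obs_solution f h g xh x psi \<Longrightarrow> (\<forall>k\<ge>p. psi k = phi f k x)"
    using assms unfolding deadbeat_observable_def deadbeat_observer_def f_def h_def by blast
  have key: "(f^^p) a = (f^^p) b" if hab: "\<forall>i<p. h ((f^^i) a) = h ((f^^i) b)" for a b
  proof -
    let ?ya = "\<lambda>k. h (phi f k a)" and ?yb = "\<lambda>k. h (phi f k b)"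
    have "obs_seq g ?ya 0 p = phi f p a"
      using obs[OF obs_seq_sol[OF ne]] by blast
    moreover have "obs_seq g ?yb 0 p = phi f p b"
      using obs[OF obs_seq_sol[OF ne]] by blast
    moreover have "obs_seq g ?ya 0 p = obs_seq g ?yb 0 p"
      by (rule obs_seq_agree) (use hab in \<open>auto simp: phi_def\<close>)
    ultimately show ?thesis by (simp add: phi_def)
  qed
  show ?thesis
  proof (intro exI[of _ "Suc p"] conjI allI)
    fix x :: "real ^ 'n"
    show "(\<exists>z. eqcls (\<lambda>x. A *v x) (\<lambda>x. C *v x) (Suc p - 1) x = {z}) \<or>
          eqcls (\<lambda>x. A *v x) (\<lambda>x. C *v x) (Suc p - 1) x = {}"
    proof (cases "eqcls f h p x = {}")
      case True then show ?thesis by (simp add: f_def h_def)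
    next
      case False
      then obtain z0 where z0: "z0 \<in> eqcls f h p x" by blast
      then obtain a' b' where ab': "(f^^p) a' = x" "(f^^p) b' = z0"
        "\<forall>i\<le>p. h ((f^^i) a') = h ((f^^i) b')" unfolding eqcls_traj by blast
      have "eqcls f h p x = {z0}"
      proof (intro equalityI subsetI)
        fix z assume "z \<in> eqcls f h p x"
        then obtain a b where ab: "(f^^p) a = x" "(f^^p) b = z"
          "\<forall>i\<le>p. h ((f^^i) a) = h ((f^^i) b)" unfolding eqcls_traj by blast
        have "(f^^p) (b - b') = (f^^p) (a - a')"
        proof (rule key, intro allI impI)
          fix i assume "i < p"
          then show "h ((f^^i) (b - b')) = h ((f^^i) (a - a'))"
            using ab(3) ab'(3) unfolding f_def h_def lin_pow lin_C by simp
        qed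
        then have "z - z0 = x - x" using ab ab' unfolding f_def lin_pow by simp
        then show "z \<in> {z0}" by simp
      qed (use z0 in simp)
      then show ?thesis by (simp add: f_def h_def)
    qed
  qed simp
qed


lemma dir2:
  fixes A :: "real ^ 'n ^ 'n" and C :: "real ^ 'n ^ 'm"
  assumes p: "p \<ge> 1" and cond: "\<forall>x :: real ^ 'n.
          (\<exists>z. eqcls (\<lambda>x. A *v x) (\<lambda>x. C *v x) (p - 1) x = {z}) \<or>
          eqcls (\<lambda>x. A *v x) (\<lambda>x. C *v x) (p - 1) x = {}"
  shows "deadbeat_observable (\<lambda>x. A *v x) (\<lambda>x. C *v x)"
proof -
  define f where "f = (\<lambda>x. A *v x)"
  define h where "h = (\<lambda>x. C *v x)"
  define K where "K = KK A C"
  have Kp: "d = 0" if d: "d \<in> K p" for d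
  proof -
    obtain c where c: "d = (f^^p) c" "\<forall>i<p. C *v ((f^^i) c) = 0"
      using KK_char[OF d[unfolded K_def]] unfolding f_def by blast
    have z0: "0 \<in> eqcls f h (p - 1) 0" unfolding eqcls_traj
      by (rule exI[of _ 0], rule exI[of _ 0]) (simp add: f_def lin_pow0)
    then have ex: "eqcls f h (p - 1) 0 \<noteq> {}" by blast
    then obtain z where z: "eqcls f h (p - 1) 0 = {z}" using cond unfolding f_def h_def by blast
    note z0
    moreover have "(f^^(p-1)) c \<in> eqcls f h (p - 1) 0" unfolding eqcls_traj
    proof (rule exI[of _ 0], rule exI[of _ c], intro conjI allI impI)
      show "(f ^^ (p - 1)) 0 = 0" by (simp add: f_def lin_pow0)
      fix i assume "i \<le> p - 1"
      then have "i < p" using p by linarith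
      then show "h ((f ^^ i) 0) = h ((f ^^ i) c)" using c(2) by (simp add: f_def h_def lin_pow0)
    qed simp
    ultimately have "(f^^(p-1)) c = 0" using z by simp
    moreover have "(f^^p) c = f ((f^^(p-1)) c)"
      using p by (metis Suc_diff_1 comp_apply funpow.simps(2) less_eq_Suc_le One_nat_def)
    ultimately show ?thesis using c(1) by (simp add: f_def)
  qed
  define feas where "feas xh y j = (\<exists>z. C *v z = y \<and> z - xh \<in> K j)" for xh y j
  define J where "J xh y = (GREATEST j. j \<le> p \<and> feas xh y j)" for xh y
  define g where "g xh y = (if (\<exists>z. C *v z = y) then f ` {z. C *v z = y \<and> z - xh \<in> K (J xh y)}
     else {0})" for xh y
  have Jfeas: "J xh y \<le> p \<and> feas xh y (J xh y)" if "feas xh y j" "j \<le> p" for xh y j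
    unfolding J_def by (rule GreatestI_nat[of _ j p]) (use that in auto)
  have Jge: "j \<le> J xh y" if "feas xh y j" "j \<le> p" for xh y j
    unfolding J_def by (rule Greatest_le_nat[of _ j p]) (use that in auto)
  have feas0: "feas xh y 0" if "C *v z = y" for xh y z
    unfolding feas_def K_def using that by auto
  have gne: "\<forall>xh y. g xh y \<noteq> {}"
  proof (intro allI)
    fix xh y
    show "g xh y \<noteq> {}"
    proof (cases "\<exists>z. C *v z = y")
      case True
      then obtain z where "C *v z = y" by blast
      with Jfeas[OF feas0] obtain z' where "C *v z' = y" "z' - xh \<in> K (J xh y)"
        unfolding feas_def by blast
      then show ?thesis using True unfolding g_def by auto
    qed (simp add: g_def)
  qed
  have inv: "psi k - phi f k x \<in> K (min k p)" if sol: "is_obs_solution f h g xh x psi" for x xh psi k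
  proof (induction k)
    case 0 then show ?case by (simp add: K_def)
  next
    case (Suc k)
    let ?j = "min k p" and ?y = "C *v phi f k x"
    have step: "psi (Suc k) \<in> g (psi k) ?y" using sol unfolding is_obs_solution_def h_def by blast
    have "phi f k x - psi k \<in> K ?j"
      using KK_neg[OF Suc.IH[unfolded K_def]] by (simp add: K_def)
    then have fe: "feas (psi k) ?y ?j" unfolding feas_def by blast
    have jle: "?j \<le> J (psi k) ?y" using Jge[OF fe] by simp
    obtain z' where z': "psi (Suc k) = A *v z'" "C *v z' = ?y" "z' - psi k \<in> K (J (psi k) ?y)"
      using step unfolding g_def f_def by (auto split: if_splits)
    have "z' - psi k \<in> K ?j" using z'(3) KK_anti[OF jle] by (auto simp: K_def)
    then have "(z' - psi k) + (psi k - phi f k x) \<in> K ?j"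
      using Suc.IH KK_add unfolding K_def by blast
    then have zz: "z' - phi f k x \<in> K ?j" by simp
    have "C *v (z' - phi f k x) = 0" using z'(2) by (simp add: lin_C)
    with zz have "A *v (z' - phi f k x) \<in> K (Suc ?j)" by (auto simp: K_def)
    moreover have "psi (Suc k) - phi f (Suc k) x = A *v (z' - phi f k x)"
      using z'(1) by (simp add: phi_def f_def matrix_vector_mult_diff_distrib)
    moreover have "K (Suc ?j) \<subseteq> K (min (Suc k) p)"
      unfolding K_def by (rule KK_anti) simp
    ultimately show ?case by auto
  qed
  have "deadbeat_observer f h g"
    unfolding deadbeat_observer_def
  proof (intro conjI exI[of _ p] allI impI p)
    show "\<And>xh y. g xh y \<noteq> {}" using gne by blast
  next
    fix x xh psi k assume sol: "is_obs_solution f h g xh x psi" and "p \<le> k"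
    then have "psi k - phi f k x \<in> K p" using inv[OF sol, of k] by simp
    then show "psi k = phi f k x" using Kp by fastforce
  qed
  then show ?thesis unfolding deadbeat_observable_def f_def h_def by blast
qed

theorem theorem1:
  fixes A :: "real ^ 'n ^ 'n" and C :: "real ^ 'n ^ 'm"
  shows "deadbeat_observable (\<lambda>x. A *v x) (\<lambda>x. C *v x) \<longleftrightarrow>
    (\<exists>p::nat. p \<ge> 1 \<and>
       (\<forall>x :: real ^ 'n.
          (\<exists>z. eqcls (\<lambda>x. A *v x) (\<lambda>x. C *v x) (p - 1) x = {z}) \<or>
          eqcls (\<lambda>x. A *v x) (\<lambda>x. C *v x) (p - 1) x = {}))"
  using dir1 dir2 by metis

end
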